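(* Let $P=(A_1,\dots,A_n)$ be a cyclic $n$-gon (distinct vertices on a circle) with vertices ordered anticlockwise, and take all indices modulo $n$ in $\{1,\dots,n\}$. Let $m$ be an integer with $2\le m\le n-1$, and let $q,r\in\{1,\dots,n\}$ be such that $q,q+1,\dots,q+m-2,r,r+1$ are pairwise distinct. Write $I=\{q,q+1,\dots,q+m-2\}$. Then \[ S_{q,r,r+1}\prod_{k=q+1}^{q+m-2} x_{k,r+1} = \sum_{t=0}^{m-3} S_{q+t,\,q+t+1,\,r+1}\; x_{r,r+1}\!\!\prod_{k\in I\setminus\{q+t,q+t+1\}}\!\! x_{k,r+1} \;+\; S_{q+m-2,\,r,\,r+1}\prod_{k=q}^{q+m-3} x_{k,r+1}. \]
   Context: For points $A_p=(x_p,y_p)$, $x_{pq}:=(x_q-x_p)^2+(y_q-y_p)^2$ is the squared distance between $A_p$ and $A_q$, and $S_{pqr}:=2[(x_q-x_p)(y_r-y_p)-(y_q-y_p)(x_r-x_p)]$ is four times the signed area of triangle $A_pA_qA_r$; these are the entries of the polygonal Heronian frieze of $P$. Empty sums equal $0$ and empty products equal $1$. *)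

theory Defs
  imports Complex_Main
begin

text \<open>Squared distance between points p and q (entry x_pq of the Heronian frieze).\<close>
definition sqd :: "real \<times> real \<Rightarrow> real \<times> real \<Rightarrow> real" where
  "sqd p q = (fst q - fst p)^2 + (snd q - snd p)^2"

text \<open>Four times the signed area of triangle p q r (entry S_pqr).\<close>
definition S4 :: "real \<times> real \<Rightarrow> real \<times> real \<Rightarrow> real \<times> real \<Rightarrow> real" where
  "S4 p q r = 2 * ((fst q - fst p) * (snd r - snd p) - (snd q - snd p) * (fst r - fst p))"

definition idx :: "nat \<Rightarrow> nat \<Rightarrow> nat" where
  "idx n k = ((k + n - 1) mod n) + 1"

definition cyclic_ccw :: "nat \<Rightarrow> (nat \<Rightarrow> real \<times> real) \<Rightarrow> bool" where
  "cyclic_ccw n A \<longleftrightarrow> inj_on A {1..n} \<and>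
     (\<exists>c \<rho> \<theta>. \<rho> > 0 \<and>
        (\<forall>i\<in>{1..n}. A i = (fst c + \<rho> * cos (\<theta> i), snd c + \<rho> * sin (\<theta> i))) \<and>
        (\<forall>i. 1 \<le> i \<and> i < n \<longrightarrow> \<theta> i < \<theta> (Suc i)) \<and>
        \<theta> n < \<theta> 1 + 2 * pi)"

end

theory Submission
  imports Defs
begin
lemma key_id:
  fixes P Q R Z c :: "real \<times> real"
  shows "S4 P Q Z * sqd R Z + S4 Q R Z * sqd P Z - S4 P R Z * sqd Q Z =
    S4 P Q Z * (sqd c R - sqd c Z) + S4 Q R Z * (sqd c P - sqd c Z) - S4 P R Z * (sqd c Q - sqd c Z)"
  unfolding sqd_def S4_def
  apply (cases P; cases Q; cases R; cases Z; cases c)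
  apply simp
  by (simp add: algebra_simps power2_eq_square)

lemma key:
  assumes "sqd c P = s" "sqd c Q = s" "sqd c R = s" "sqd c Z = s"
  shows "S4 P Q Z * sqd R Z + S4 Q R Z * sqd P Z = S4 P R Z * sqd Q Z"
  using key_id[of P Q Z R c] assms by simp

lemma fadd:
  assumes "sqd c P = s" "sqd c Q = s" "sqd c R = s" "sqd c Z = s"
    and "sqd P Z \<noteq> 0" "sqd Q Z \<noteq> 0" "sqd R Z \<noteq> 0"
  shows "S4 P Q Z / (sqd P Z * sqd Q Z) + S4 Q R Z / (sqd Q Z * sqd R Z)
       = S4 P R Z / (sqd P Z * sqd R Z)"
proof -
  have k: "S4 P Q Z * sqd R Z + S4 Q R Z * sqd P Z = S4 P R Z * sqd Q Z"
    using key[OF assms(1-4)] .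
  have "S4 P Q Z / (sqd P Z * sqd Q Z) + S4 Q R Z / (sqd Q Z * sqd R Z)
       - S4 P R Z / (sqd P Z * sqd R Z) = (S4 P Q Z * sqd R Z + S4 Q R Z * sqd P Z - S4 P R Z * sqd Q Z)
        / (sqd P Z * sqd Q Z * sqd R Z)"
    using assms(5-7) by (simp add: field_simps)
  then show ?thesis using k by simp
qed

lemma tele_f:
  fixes p :: "nat \<Rightarrow> real \<times> real" and a N :: nat
  assumes circ: "\<And>i. i \<le> a + N \<Longrightarrow> sqd c (p i) = s" "sqd c R = s" "sqd c Z = s"
    and nz: "\<And>i. a \<le> i \<Longrightarrow> i \<le> a + N \<Longrightarrow> sqd (p i) Z \<noteq> 0" "sqd R Z \<noteq> 0"
  shows "S4 (p a) R Z / (sqd (p a) Z * sqd R Z) =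
     (\<Sum>t<N. S4 (p (a+t)) (p (a+t+1)) Z / (sqd (p (a+t)) Z * sqd (p (a+t+1)) Z))
     + S4 (p (a+N)) R Z / (sqd (p (a+N)) Z * sqd R Z)"
  using assms
proof (induction N)
  case 0
  then show ?case by simp
next
  case (Suc N)
  have IH: "S4 (p a) R Z / (sqd (p a) Z * sqd R Z) =
     (\<Sum>t<N. S4 (p (a+t)) (p (a+t+1)) Z / (sqd (p (a+t)) Z * sqd (p (a+t+1)) Z))
     + S4 (p (a+N)) R Z / (sqd (p (a+N)) Z * sqd R Z)"
    using Suc by auto
  have "S4 (p (a+N)) R Z / (sqd (p (a+N)) Z * sqd R Z) =
     S4 (p (a+N)) (p (a+N+1)) Z / (sqd (p (a+N)) Z * sqd (p (a+N+1)) Z)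
     + S4 (p (a+N+1)) R Z / (sqd (p (a+N+1)) Z * sqd R Z)"
    by (rule fadd[symmetric, of c _ s]) (use Suc.prems in auto)
  then show ?case using IH by simp
qed

lemma tele:
  fixes p :: "nat \<Rightarrow> real \<times> real" and a N :: nat
  assumes circ: "\<And>i. i \<le> a + N \<Longrightarrow> sqd c (p i) = s" "sqd c R = s" "sqd c Z = s"
    and nz: "\<And>i. a \<le> i \<Longrightarrow> i \<le> a + N \<Longrightarrow> sqd (p i) Z \<noteq> 0" "sqd R Z \<noteq> 0"
  shows "S4 (p a) R Z * (\<Prod>k\<in>{a+1..a+N}. sqd (p k) Z) =
     (\<Sum>t<N. S4 (p (a+t)) (p (a+t+1)) Z * sqd R Z * (\<Prod>k\<in>{a..a+N}-{a+t,a+t+1}. sqd (p k) Z))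
     + S4 (p (a+N)) R Z * (\<Prod>k\<in>{a..<a+N}. sqd (p k) Z)"
proof -
  define h where "h k = sqd (p k) Z" for k
  define D where "D = sqd R Z * (\<Prod>k\<in>{a..a+N}. h k)"
  have e: "S4 (p a) R Z / (h a * sqd R Z) =
     (\<Sum>t<N. S4 (p (a+t)) (p (a+t+1)) Z / (h (a+t) * h (a+t+1)))
     + S4 (p (a+N)) R Z / (h (a+N) * sqd R Z)"
    unfolding h_def by (rule tele_f[OF assms])
  have hnz: "a \<le> i \<Longrightarrow> i \<le> a + N \<Longrightarrow> h i \<noteq> 0" for i using nz unfolding h_def by auto
  have D1: "S4 (p a) R Z / (h a * sqd R Z) * D = S4 (p a) R Z * (\<Prod>k\<in>{a+1..a+N}. h k)"
  proof -
    have "{a..a+N} = insert a {a+1..a+N}" by auto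
    then have "(\<Prod>k\<in>{a..a+N}. h k) = h a * (\<Prod>k\<in>{a+1..a+N}. h k)" by simp
    then show ?thesis unfolding D_def using hnz[of a] nz(2) by simp
  qed
  have D2: "S4 (p (a+N)) R Z / (h (a+N) * sqd R Z) * D = S4 (p (a+N)) R Z * (\<Prod>k\<in>{a..<a+N}. h k)"
  proof -
    have "{a..a+N} = insert (a+N) {a..<a+N}" by auto
    then have "(\<Prod>k\<in>{a..a+N}. h k) = h (a+N) * (\<Prod>k\<in>{a..<a+N}. h k)" by simp
    then show ?thesis unfolding D_def using hnz[of "a+N"] nz(2) by simp
  qed
  have D3: "S4 (p (a+t)) (p (a+t+1)) Z / (h (a+t) * h (a+t+1)) * D =
      S4 (p (a+t)) (p (a+t+1)) Z * sqd R Z * (\<Prod>k\<in>{a..a+N}-{a+t,a+t+1}. h k)" if "t < N" for t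
  proof -
    have "(\<Prod>k\<in>{a..a+N}. h k) = h (a+t) * (\<Prod>k\<in>{a..a+N}-{a+t}. h k)"
      by (rule prod.remove) (use that in auto)
    also have "(\<Prod>k\<in>{a..a+N}-{a+t}. h k) = h (a+t+1) * (\<Prod>k\<in>{a..a+N}-{a+t}-{a+t+1}. h k)"
      by (rule prod.remove) (use that in auto)
    also have "{a..a+N}-{a+t}-{a+t+1} = {a..a+N}-{a+t,a+t+1}" by auto
    finally have "(\<Prod>k\<in>{a..a+N}. h k) = h (a+t) * (h (a+t+1) * (\<Prod>k\<in>{a..a+N}-{a+t,a+t+1}. h k))" .
    then show ?thesis unfolding D_def using hnz[of "a+t"] hnz[of "a+t+1"] that by simp
  qed
  have "S4 (p a) R Z * (\<Prod>k\<in>{a+1..a+N}. h k) = S4 (p a) R Z / (h a * sqd R Z) * D"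
    using D1 by simp
  also have "\<dots> = ((\<Sum>t<N. S4 (p (a+t)) (p (a+t+1)) Z / (h (a+t) * h (a+t+1)))
     + S4 (p (a+N)) R Z / (h (a+N) * sqd R Z)) * D" using e by simp
  also have "\<dots> = (\<Sum>t<N. S4 (p (a+t)) (p (a+t+1)) Z / (h (a+t) * h (a+t+1)) * D)
     + S4 (p (a+N)) R Z / (h (a+N) * sqd R Z) * D"
    by (simp only: distrib_right sum_distrib_right)
  also have "\<dots> = (\<Sum>t<N. S4 (p (a+t)) (p (a+t+1)) Z * sqd R Z * (\<Prod>k\<in>{a..a+N}-{a+t,a+t+1}. h k))
     + S4 (p (a+N)) R Z * (\<Prod>k\<in>{a..<a+N}. h k)"
  proof -
    have "(\<Sum>t<N. S4 (p (a+t)) (p (a+t+1)) Z / (h (a+t) * h (a+t+1)) * D) =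
      (\<Sum>t<N. S4 (p (a+t)) (p (a+t+1)) Z * sqd R Z * (\<Prod>k\<in>{a..a+N}-{a+t,a+t+1}. h k))"
      by (rule sum.cong[OF refl], rule D3, simp)
    then show ?thesis using D2 by (rule arg_cong2[where f="(+)"])
  qed
  finally show ?thesis unfolding h_def .
qed
lemma sqd_eq0: "sqd a b = 0 \<Longrightarrow> a = b"
  by (cases a; cases b) (simp add: sqd_def sum_power2_eq_zero_iff)

lemma idx_range: "0 < n \<Longrightarrow> idx n k \<in> {1..n}"
  unfolding idx_def by (simp add: Suc_le_eq)

lemma idx_id: "k \<in> {1..n} \<Longrightarrow> idx n k = k"
  unfolding idx_def by (cases k) auto

theorem corollary2p10:
  fixes n m q r :: nat and A :: "nat \<Rightarrow> real \<times> real"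
  assumes "cyclic_ccw n A"
    and "2 \<le> m" and "m \<le> n - 1"
    and "q \<in> {1..n}" and "r \<in> {1..n}"
    and "distinct (map (idx n) ([q..<q + m - 1] @ [r, r + 1]))"
  shows "S4 (A q) (A r) (A (idx n (r + 1))) *
           (\<Prod>k\<in>{q + 1..q + m - 2}. sqd (A (idx n k)) (A (idx n (r + 1))))
       = (\<Sum>t\<in>{0..<m - 2}.
            S4 (A (idx n (q + t))) (A (idx n (q + t + 1))) (A (idx n (r + 1)))
            * sqd (A r) (A (idx n (r + 1)))
            * (\<Prod>k\<in>idx n ` {q..q + m - 2} - {idx n (q + t), idx n (q + t + 1)}.
                 sqd (A k) (A (idx n (r + 1)))))
         + S4 (A (idx n (q + m - 2))) (A r) (A (idx n (r + 1))) *
           (\<Prod>k\<in>{q..q + m - 3}. sqd (A (idx n k)) (A (idx n (r + 1))))"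
proof -
  obtain N where mN: "m = N + 2" using assms(2) by (metis add.commute le_Suc_ex)
  have n0: "0 < n" using assms(4) by auto
  define Z where "Z = A (idx n (r + 1))"
  obtain c \<rho> \<theta> where inj: "inj_on A {1..n}" and
    Ai: "\<And>i. i\<in>{1..n} \<Longrightarrow> A i = (fst c + \<rho> * cos (\<theta> i), snd c + \<rho> * sin (\<theta> i))"
    using assms(1) unfolding cyclic_ccw_def by blast
  have circ: "sqd c (A i) = \<rho>^2" if "i\<in>{1..n}" for i
  proof -
    have "sqd c (A i) = \<rho>^2 * (cos (\<theta> i))^2 + \<rho>^2 * (sin (\<theta> i))^2"
      using Ai[OF that] by (simp add: sqd_def power_mult_distrib algebra_simps)
    then show ?thesis by (metis distrib_left mult.right_neutral sin_cos_squared_add add.commute)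
  qed
  have circ': "sqd c (A (idx n i)) = \<rho>^2" for i using circ idx_range[OF n0] by blast
  have qq: "idx n q = q" and rr: "idx n r = r" using assms(4,5) idx_id by auto
  have D: "distinct (map (idx n) ([q..<q + N + 1] @ [r, r + 1]))" using assms(6) mN
    by (simp add: add.assoc)
  have St: "set [q..<q + N + 1] = {q..q+N}" by auto
  have injq: "inj_on (idx n) {q..q+N}" and rq: "idx n r \<notin> idx n ` {q..q+N}"
    and r1q: "idx n (r+1) \<notin> idx n ` {q..q+N}" and rr1': "idx n r \<noteq> idx n (r+1)"
    using D unfolding St[symmetric] by (simp_all del: upt_Suc add: distinct_map)
  have rr1: "r \<noteq> idx n (r+1)" using rr1' rr by simp
  have AZ: "A (idx n (r+1)) \<noteq> A i" if "i \<in> {1..n}" "i \<noteq> idx n (r+1)" for i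
    using inj that idx_range[OF n0] unfolding inj_on_def by metis
  have T: "S4 (A (idx n q)) (A r) Z * (\<Prod>k\<in>{q+1..q+N}. sqd (A (idx n k)) Z) =
     (\<Sum>t<N. S4 (A (idx n (q+t))) (A (idx n (q+t+1))) Z * sqd (A r) Z * (\<Prod>k\<in>{q..q+N}-{q+t,q+t+1}. sqd (A (idx n k)) Z))
     + S4 (A (idx n (q+N))) (A r) Z * (\<Prod>k\<in>{q..<q+N}. sqd (A (idx n k)) Z)"
  proof (rule tele[where c=c and s="\<rho>^2"])
    show "sqd c (A (idx n i)) = \<rho>^2" for i by (rule circ')
    show "sqd c (A r) = \<rho>^2" using circ assms(5) by blast
    show "sqd c Z = \<rho>^2" unfolding Z_def by (rule circ')
    show "sqd (A (idx n i)) Z \<noteq> 0" if "q \<le> i" "i \<le> q + N" for i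
    proof
      assume "sqd (A (idx n i)) Z = 0"
      hence "A (idx n i) = Z" by (rule sqd_eq0)
      moreover have "idx n i \<noteq> idx n (r+1)"
      proof
        assume "idx n i = idx n (r+1)"
        then have "idx n (r+1) \<in> idx n ` {q..q+N}" using that by (metis atLeastAtMost_iff imageI)
        then show False using r1q by blast
      qed
      ultimately show False using AZ[of "idx n i"] idx_range[OF n0] unfolding Z_def by metis
    qed
    show "sqd (A r) Z \<noteq> 0"
    proof
      assume "sqd (A r) Z = 0"
      hence "A r = Z" by (rule sqd_eq0)
      then show False using AZ[of r] assms(5) rr1 unfolding Z_def by metis
    qed
  qed
  have S: "idx n ` {q..q+N} - {idx n (q + t), idx n (q + t + 1)} = idx n ` ({q..q+N} - {q+t,q+t+1})"
    if "t < N" for t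
  proof -
    have "{q+t,q+t+1} \<subseteq> {q..q+N}" using that by auto
    then have "idx n ` {q+t,q+t+1} = {idx n (q + t), idx n (q + t + 1)}" by simp
    moreover have "idx n ` ({q..q+N} - {q+t,q+t+1}) = idx n ` {q..q+N} - idx n ` {q+t,q+t+1}"
      by (rule inj_on_image_set_diff[OF injq]) (use \<open>{q+t,q+t+1} \<subseteq> {q..q+N}\<close> in auto)
    ultimately show ?thesis by simp
  qed
  have P: "(\<Prod>k\<in>idx n ` {q..q+N} - {idx n (q + t), idx n (q + t + 1)}. sqd (A k) Z)
     = (\<Prod>k\<in>{q..q+N}-{q+t,q+t+1}. sqd (A (idx n k)) Z)" if "t < N" for t
    unfolding S[OF that]
    by (rule prod.reindex_cong[OF inj_on_subset[OF injq]]) auto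
  have I3: "{q..q + (N+2) - 3} = {q..<q+N}" using assms(4) by auto
  show ?thesis
    unfolding mN Z_def[symmetric] I3
    using T qq P by (simp add: atLeast0LessThan)
qed
end
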